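(* With $T_{2,1}(x)=\sum_{n\ge 2}|\mathcal{S}_{n,1}^{2\prec n}(1324)|x^n$, one has \[ T_{2,1}(x)=\frac12\,x^2\,\frac{d}{dx}\big(x f(x)\big). \]
   Context: $\mathcal{S}_n(1324)$ denotes the set of permutations of $\{1,\dots,n\}$ (in one-line notation) avoiding the pattern $1324$. For $a,k\ge1$, $\mathcal{S}_{n,k}^{a\prec n}(1324)$ is the set of $\sigma\in\mathcal{S}_n(1324)$ with $\sigma^{-1}(n)-\sigma^{-1}(a)=k$ and $\sigma^{-1}(b)>\sigma^{-1}(n)$ for all $b\in\{1,\dots,a-1\}$. Let $a_{n,1}=|\mathcal{S}_{n,1}^{1\prec n}(1324)|$ and $f(x)=\sum_{n\ge2}a_{n,1}x^{n-1}=x+2x^2+6x^3+22x^4+\cdots$ (OEIS A000139). *)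

theory Defs
  imports Main "HOL-Computational_Algebra.Formal_Power_Series"
begin

text \<open>Permutations of {1..n} in one-line notation are lists sigma with
  sigma ! (i-1) = sigma(i). Positions are 0-based; only differences of positions matter.\<close>

definition pos :: "nat list \<Rightarrow> nat \<Rightarrow> nat" where
  "pos \<sigma> v = (THE i. i < length \<sigma> \<and> \<sigma> ! i = v)"

definition avoids1324 :: "nat list \<Rightarrow> bool" where
  "avoids1324 \<sigma> \<longleftrightarrow> \<not> (\<exists>i j k l. i < j \<and> j < k \<and> k < l \<and> l < length \<sigma> \<and>
      \<sigma> ! i < \<sigma> ! k \<and> \<sigma> ! k < \<sigma> ! j \<and> \<sigma> ! j < \<sigma> ! l)"

definition Av1324 :: "nat \<Rightarrow> nat list set" where
  "Av1324 n = {\<sigma>. distinct \<sigma> \<and> set \<sigma> = {1..n} \<and> avoids1324 \<sigma>}"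

definition Sprec :: "nat \<Rightarrow> nat \<Rightarrow> nat \<Rightarrow> nat list set" where
  "Sprec n k a = {\<sigma> \<in> Av1324 n. int (pos \<sigma> n) - int (pos \<sigma> a) = int k \<and>
      (\<forall>b \<in> {1..<a}. pos \<sigma> b > pos \<sigma> n)}"

definition a_n1 :: "nat \<Rightarrow> nat" where
  "a_n1 n = card (Sprec n 1 1)"

definition f_fps :: "rat fps" where
  "f_fps = Abs_fps (\<lambda>m. if m \<ge> 1 then of_nat (a_n1 (m + 1)) else 0)"

definition T21_fps :: "rat fps" where
  "T21_fps = Abs_fps (\<lambda>n. if n \<ge> 2 then of_nat (card (Sprec n 1 2)) else 0)"

end

theory Submission
  imports Defs
begin


lemma pos_eq: "distinct s \<Longrightarrow> i < length s \<Longrightarrow> s ! i = v \<Longrightarrow> pos s v = i"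
  unfolding pos_def by (rule the_equality) (auto simp: nth_eq_iff_index_eq)

lemma pos_nth: assumes "distinct s" "v \<in> set s" shows "pos s v < length s" "s ! pos s v = v"
proof -
  obtain i where "i < length s" "s ! i = v" using assms(2) by (auto simp: in_set_conv_nth)
  then show "pos s v < length s" "s ! pos s v = v" using pos_eq[OF assms(1)] by auto
qed

lemma avoids_rc:
  assumes av: "avoids1324 s" and le: "\<forall>x\<in>set s. x \<le> N"
  shows "avoids1324 (rev (map (\<lambda>x. N - x) s))"
  unfolding avoids1324_def
proof (rule notI, elim exE conjE)
  fix i j k l
  let ?r = "rev (map (\<lambda>x. N - x) s)"
  let ?L = "length s"
  assume h: "i < j" "j < k" "k < l" "l < length ?r" "?r ! i < ?r ! k" "?r ! k < ?r ! j" "?r ! j < ?r ! l"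
  have r: "\<And>p. p < ?L \<Longrightarrow> ?r ! p = N - s ! (?L - Suc p)" by (simp add: rev_nth)
  have sle: "\<And>p. p < ?L \<Longrightarrow> s ! p \<le> N" using le by auto
  have L: "l < ?L" using h by simp
  have s_eq: "s ! (?L - Suc p) = N - ?r ! p" if "p < ?L" for p
  proof -
    have "s ! (?L - Suc p) \<le> N" using sle that by simp
    then show ?thesis using r[OF that] by simp
  qed
  have rle: "\<And>p. p < ?L \<Longrightarrow> ?r ! p \<le> N" using r by simp
  have i1: "?L - Suc l < ?L - Suc k" "?L - Suc k < ?L - Suc j" "?L - Suc j < ?L - Suc i" "?L - Suc i < ?L"
    using h L by auto
  have v1: "s ! (?L - Suc l) < s ! (?L - Suc j)"
    using s_eq[of l] s_eq[of j] rle[of l] rle[of j] h L by simp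
  have v2: "s ! (?L - Suc j) < s ! (?L - Suc k)"
    using s_eq[of k] s_eq[of j] rle[of k] rle[of j] h L by simp
  have v3: "s ! (?L - Suc k) < s ! (?L - Suc i)"
    using s_eq[of k] s_eq[of i] rle[of k] rle[of i] h L by simp
  have "\<exists>i j k l. i < j \<and> j < k \<and> k < l \<and> l < length s \<and> s ! i < s ! k \<and> s ! k < s ! j \<and> s ! j < s ! l"
    using i1 v1 v2 v3 by blast
  then show False using av unfolding avoids1324_def by blast
qed

lemma avoids_map_mono:
  assumes "strict_mono f" shows "avoids1324 (map f s) = avoids1324 s"
proof -
  have key: "(map f s ! i < map f s ! k \<and> map f s ! k < map f s ! j \<and> map f s ! j < map f s ! l) =
      (s ! i < s ! k \<and> s ! k < s ! j \<and> s ! j < s ! l)"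
    if "i < j" "j < k" "k < l" "l < length s" for i j k l
  proof -
    have "i < length s" "j < length s" "k < length s" using that by auto
    then show ?thesis using that(4) by (simp add: strict_mono_less[OF assms])
  qed
  show ?thesis unfolding avoids1324_def length_map
  proof
    assume h: "\<not> (\<exists>i j k l. i < j \<and> j < k \<and> k < l \<and> l < length s \<and> map f s ! i < map f s ! k \<and> map f s ! k < map f s ! j \<and> map f s ! j < map f s ! l)"
    show "\<not> (\<exists>i j k l. i < j \<and> j < k \<and> k < l \<and> l < length s \<and> s ! i < s ! k \<and> s ! k < s ! j \<and> s ! j < s ! l)"
    proof
      assume "\<exists>i j k l. i < j \<and> j < k \<and> k < l \<and> l < length s \<and> s ! i < s ! k \<and> s ! k < s ! j \<and> s ! j < s ! l"
      then obtain i j k l where "i < j" "j < k" "k < l" "l < length s" "s ! i < s ! k \<and> s ! k < s ! j \<and> s ! j < s ! l" by blast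
      with key[of i j k l] h show False by blast
    qed
  next
    assume h: "\<not> (\<exists>i j k l. i < j \<and> j < k \<and> k < l \<and> l < length s \<and> s ! i < s ! k \<and> s ! k < s ! j \<and> s ! j < s ! l)"
    show "\<not> (\<exists>i j k l. i < j \<and> j < k \<and> k < l \<and> l < length s \<and> map f s ! i < map f s ! k \<and> map f s ! k < map f s ! j \<and> map f s ! j < map f s ! l)"
    proof
      assume "\<exists>i j k l. i < j \<and> j < k \<and> k < l \<and> l < length s \<and> map f s ! i < map f s ! k \<and> map f s ! k < map f s ! j \<and> map f s ! j < map f s ! l"
      then obtain i j k l where "i < j" "j < k" "k < l" "l < length s" "map f s ! i < map f s ! k \<and> map f s ! k < map f s ! j \<and> map f s ! j < map f s ! l" by blast
      with key[of i j k l] h show False by blast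
    qed
  qed
qed

lemma nth_ins: "p < Suc (length A + length B) \<Longrightarrow>
   (A @ x # B) ! p = (if p < length A then A ! p else if p = length A then x else B ! (p - Suc (length A)))"
  by (auto simp: nth_append nth_Cons')

lemma nth_app: "(A @ B) ! p = (if p < length A then A ! p else B ! (p - length A))"
  by (simp add: nth_append)

lemma avoids_del:
  assumes av: "avoids1324 (A @ x # B)" shows "avoids1324 (A @ B)"
  unfolding avoids1324_def
proof (rule notI, elim exE conjE)
  fix i j k l
  let ?s = "A @ x # B" and ?t = "A @ B"
  define g where "g p = (if p < length A then p else Suc p)" for p
  assume h: "i < j" "j < k" "k < l" "l < length ?t" "?t ! i < ?t ! k" "?t ! k < ?t ! j" "?t ! j < ?t ! l"
  have gv: "?s ! (g p) = ?t ! p" if "p < length ?t" for p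
    using that unfolding g_def by (auto simp: nth_append)
  have gm: "p < q \<Longrightarrow> g p < g q" for p q unfolding g_def by auto
  have "g l < length ?s" using h unfolding g_def by auto
  then have "\<exists>i j k l. i < j \<and> j < k \<and> k < l \<and> l < length ?s \<and> ?s ! i < ?s ! k \<and> ?s ! k < ?s ! j \<and> ?s ! j < ?s ! l"
    using gm[OF h(1)] gm[OF h(2)] gm[OF h(3)] gv[of i] gv[of j] gv[of k] gv[of l] h by (intro exI[of _ "g i"] exI[of _ "g j"] exI[of _ "g k"] exI[of _ "g l"]) auto
  then show False using av unfolding avoids1324_def by blast
qed

lemma avoids_ins:
  assumes av: "avoids1324 (A @ B)" and gx: "\<forall>z\<in>set (A @ B). x < z"
    and y: "y \<in> set A" and yB: "\<forall>z\<in>set B. y < z"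
  shows "avoids1324 (A @ x # B)"
  unfolding avoids1324_def
proof (rule notI, elim exE conjE)
  fix i j k l
  let ?s = "A @ x # B" and ?t = "A @ B" and ?a = "length A"
  assume h: "i < j" "j < k" "k < l" "l < length ?s" "?s ! i < ?s ! k" "?s ! k < ?s ! j" "?s ! j < ?s ! l"
  define g where "g p = (if p < ?a then p else p - 1)" for p
  have gv: "?s ! p = ?t ! (g p)" if "p < length ?s" "p \<noteq> ?a" for p
    using that unfolding g_def by (auto simp: nth_append nth_Cons')
  have gl: "g p < length ?t" if "p < length ?s" "p \<noteq> ?a" for p
    using that unfolding g_def by auto
  have gx': "x < ?s ! p" if "p < length ?s" "p \<noteq> ?a" for p
    using gv[OF that] gl[OF that] gx by (metis nth_mem)
  have ex: "\<exists>i j k l. i < j \<and> j < k \<and> k < l \<and> l < length ?t \<and> ?t ! i < ?t ! k \<and> ?t ! k < ?t ! j \<and> ?t ! j < ?t ! l"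
  proof (cases "i = ?a")
    case True
    obtain q where q: "q < ?a" "A ! q = y" using y by (auto simp: in_set_conv_nth)
    have tq: "?t ! q = y" using q by (simp add: nth_append)
    have ja: "j > ?a" "k > ?a" "l > ?a" using h True by auto
    have kB: "?t ! (g k) \<in> set B"
    proof -
      have "g k = k - 1" "k - 1 \<ge> ?a" using ja unfolding g_def by auto
      moreover have "k - 1 < length ?t" using h by auto
      ultimately show ?thesis by (auto simp: nth_append)
    qed
    have gm: "g j < g k" "g k < g l" "q < g j" using h ja q unfolding g_def by auto
    have tk: "?t ! q < ?t ! g k" using yB kB tq by auto
    have v: "?t ! g k < ?t ! g j" "?t ! g j < ?t ! g l"
      using h ja gv[of j] gv[of k] gv[of l] by auto
    have gll: "g l < length ?t" using gl[of l] h ja by auto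
    show ?thesis using gm gll tk v by blast
  next
    case False
    have nj: "j \<noteq> ?a" "k \<noteq> ?a" "l \<noteq> ?a"
      using gx'[of i] False h by (auto simp: nth_append)
    have gm: "g i < g j" "g j < g k" "g k < g l" using h False nj unfolding g_def by auto
    have gll: "g l < length ?t" using gl[of l] h nj by auto
    have v: "?t ! g i < ?t ! g k" "?t ! g k < ?t ! g j" "?t ! g j < ?t ! g l"
      using h nj False gv[of i] gv[of j] gv[of k] gv[of l] by auto
    show ?thesis using gm gll v by blast
  qed
  then show False using av unfolding avoids1324_def by blast
qed



lemma strict_mono_Suc': "strict_mono Suc" by (simp add: strict_mono_def)

lemma len_perm: "distinct s \<Longrightarrow> set s = {1..n} \<Longrightarrow> length s = n"
  using distinct_card by fastforce

lemma core:
  assumes m: "m \<ge> 2" and t: "A @ B = map Suc \<tau>"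
  shows "A @ 1 # B \<in> Sprec (Suc m) 1 2 \<longleftrightarrow> (\<tau> \<in> Sprec m 1 1 \<and> pos \<tau> m < length A \<and> length A \<le> m)"
proof
  let ?s = "A @ 1 # B"
  assume "?s \<in> Sprec (Suc m) 1 2"
  then have ds: "distinct ?s" and ss: "set ?s = {1..Suc m}" and as: "avoids1324 ?s"
    and p1: "int (pos ?s (Suc m)) - int (pos ?s 2) = 1" and p2: "pos ?s (Suc m) < pos ?s 1"
    unfolding Sprec_def Av1324_def by auto
  have pa: "pos ?s 1 = length A" by (rule pos_eq[OF ds]) auto
  have "distinct (A @ B)" using ds by auto
  then have dt: "distinct \<tau>" using t by (metis distinct_map)
  have n1: "1 \<notin> set (A @ B)" using ds by auto
  have "set (A @ B) = set ?s - {1}" using n1 by auto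
  also have "\<dots> = {1..Suc m} - {1}" by (simp only: ss)
  also have "\<dots> = {2..Suc m}" by (auto simp: atLeastAtMost_iff)
  finally have "set (A @ B) = {2..Suc m}" .
  then have "Suc ` set \<tau> = Suc ` {1..m}" using t by (simp add: image_Suc_atLeastAtMost)
  then have st: "set \<tau> = {1..m}" by (simp only: inj_image_eq_iff[OF inj_Suc])
  have at: "avoids1324 \<tau>" using avoids_del[OF as] t avoids_map_mono[OF strict_mono_Suc'] by simp
  have lt: "length \<tau> = m" using len_perm[OF dt st] .
  have ls: "length ?s = Suc m" using len_perm[OF ds ss] .
  define p where "p = pos ?s (Suc m)"
  have "Suc m \<in> set ?s" using ss by auto
  then have pl: "p < length ?s" "?s ! p = Suc m" using pos_nth[OF ds] p_def by auto
  have pA: "p < length A" using p2 pa p_def by simp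
  have "(A @ B) ! p = Suc m" using pl pA by (simp add: nth_append)
  then have "Suc (\<tau> ! p) = Suc m" "p < length \<tau>" using t pA lt ls by (auto simp: nth_map)
  then have ptm: "pos \<tau> m = p" using pos_eq[OF dt] by auto
  define q where "q = pos ?s 2"
  have "2 \<in> set ?s" using ss m by auto
  then have ql: "q < length ?s" "?s ! q = 2" using pos_nth[OF ds] q_def by auto
  have qA: "q < length A" using p1 pA p_def q_def by simp
  have "(A @ B) ! q = 2" using ql qA by (simp add: nth_append)
  then have "Suc (\<tau> ! q) = Suc 1" "q < length \<tau>" using t qA lt ls by (auto simp: nth_map)
  then have pt1: "pos \<tau> 1 = q" using pos_eq[OF dt] by auto
  have "length A \<le> m" using ls by simp
  then show "\<tau> \<in> Sprec m 1 1 \<and> pos \<tau> m < length A \<and> length A \<le> m"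
    unfolding Sprec_def Av1324_def using dt st at ptm pt1 p1 p_def q_def pA by auto
next
  let ?s = "A @ 1 # B"
  assume "\<tau> \<in> Sprec m 1 1 \<and> pos \<tau> m < length A \<and> length A \<le> m"
  then have dt: "distinct \<tau>" and st: "set \<tau> = {1..m}" and at: "avoids1324 \<tau>"
    and p1: "int (pos \<tau> m) - int (pos \<tau> 1) = 1" and pA: "pos \<tau> m < length A" and lA: "length A \<le> m"
    unfolding Sprec_def Av1324_def by auto
  have lt: "length \<tau> = m" using len_perm[OF dt st] .
  have sAB: "set (A @ B) = {2..Suc m}" using t st by (simp add: image_Suc_atLeastAtMost)
  have dAB: "distinct (A @ B)" using t dt by (simp add: distinct_map)
  have n1: "1 \<notin> set (A @ B)" by (subst sAB) simp
  have ds: "distinct ?s" using dAB n1 by simp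
  have ss: "set ?s = {1..Suc m}" using sAB by auto
  have pm: "pos \<tau> m < length \<tau>" "\<tau> ! pos \<tau> m = m" using pos_nth[OF dt, of m] st m by auto
  have pone: "pos \<tau> 1 < length \<tau>" "\<tau> ! pos \<tau> 1 = 1" using pos_nth[OF dt, of 1] st m by auto
  have q: "pos \<tau> 1 < pos \<tau> m" using p1 by simp
  have Am: "A ! pos \<tau> m = Suc m" using pm pA t by (metis nth_append nth_map)
  have A2: "A ! pos \<tau> 1 = 2" using pone pA q t by (metis (no_types, lifting) Suc_1 dual_order.strict_trans nth_append nth_map)
  have y: "2 \<in> set A" using A2 pA q by (metis dual_order.strict_trans nth_mem)
  have yB: "\<forall>z\<in>set B. 2 < z"
  proof
    fix z assume z: "z \<in> set B"
    then have "z \<in> {2..Suc m}" using sAB by auto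
    moreover have "z \<noteq> 2" using z y dAB by auto
    ultimately show "2 < z" by auto
  qed
  have as: "avoids1324 ?s"
    by (rule avoids_ins[where y = 2]) (use at avoids_map_mono[OF strict_mono_Suc'] t sAB y yB in auto)
  have ps1: "pos ?s 1 = length A" by (rule pos_eq[OF ds]) auto
  have psm: "pos ?s (Suc m) = pos \<tau> m" by (rule pos_eq[OF ds]) (use pA Am in \<open>auto simp: nth_append\<close>)
  have ps2: "pos ?s 2 = pos \<tau> 1" by (rule pos_eq[OF ds]) (use pA A2 q in \<open>auto simp: nth_append\<close>)
  have o12: "{1..<2::nat} = {1}" by auto
  show "?s \<in> Sprec (Suc m) 1 2"
    unfolding Sprec_def Av1324_def o12 using ds ss as ps1 psm ps2 p1 pA by auto
qed



lemma finite_Sprec: "finite (Sprec n k a)"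
proof -
  have "Sprec n k a \<subseteq> {xs. set xs \<subseteq> {1..n} \<and> length xs = n}"
    unfolding Sprec_def Av1324_def using len_perm by auto
  moreover have "finite {xs. set xs \<subseteq> {1..n} \<and> length xs = n}"
    by (rule finite_lists_length_eq) simp
  ultimately show ?thesis by (rule finite_subset)
qed

definition psi :: "nat list \<times> nat \<Rightarrow> nat list" where
  "psi x = take (snd x) (map Suc (fst x)) @ 1 # drop (snd x) (map Suc (fst x))"

definition phi :: "nat list \<Rightarrow> nat list \<times> nat" where
  "phi s = (map (\<lambda>x. x - 1) (take (pos s 1) s @ drop (Suc (pos s 1)) s), pos s 1)"

lemma map_Suc_pred: "0 \<notin> set xs \<Longrightarrow> map Suc (map (\<lambda>x. x - 1) xs) = xs"
  by (induction xs) auto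

lemma Sprec_len: "s \<in> Sprec n k a \<Longrightarrow> length s = n"
  unfolding Sprec_def Av1324_def using len_perm by auto

lemma stepA:
  assumes m: "m \<ge> 2"
  shows "card (Sprec (Suc m) 1 2) = (\<Sum>\<tau>\<in>Sprec m 1 1. m - pos \<tau> m)"
proof -
  define Sig where "Sig = (SIGMA \<tau>:Sprec m 1 1. {pos \<tau> m<..m})"
  have cS: "card Sig = (\<Sum>\<tau>\<in>Sprec m 1 1. m - pos \<tau> m)"
    unfolding Sig_def by (simp add: finite_Sprec)
  have sub1: "psi ` Sig \<subseteq> Sprec (Suc m) 1 2"
  proof
    fix s assume "s \<in> psi ` Sig"
    then obtain \<tau> j where tj: "\<tau> \<in> Sprec m 1 1" "pos \<tau> m < j" "j \<le> m" and s: "s = psi (\<tau>, j)"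
      unfolding Sig_def by auto
    have lt: "length \<tau> = m" using Sprec_len[OF tj(1)] .
    have "take j (map Suc \<tau>) @ drop j (map Suc \<tau>) = map Suc \<tau>" by simp
    from core[OF m this] tj lt show "s \<in> Sprec (Suc m) 1 2" unfolding s psi_def by simp
  qed
  have sub2: "phi ` Sprec (Suc m) 1 2 \<subseteq> Sig"
  proof
    fix x assume "x \<in> phi ` Sprec (Suc m) 1 2"
    then obtain s where sS: "s \<in> Sprec (Suc m) 1 2" and x: "x = phi s" by auto
    have ds: "distinct s" and ss: "set s = {1..Suc m}" using sS unfolding Sprec_def Av1324_def by auto
    define j where "j = pos s 1"
    have jl: "j < length s" "s ! j = 1" using pos_nth[OF ds, of 1] ss j_def by auto
    define A where "A = take j s"
    define B where "B = drop (Suc j) s"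
    have sAB: "s = A @ 1 # B" using jl id_take_nth_drop[OF jl(1)] unfolding A_def B_def by metis
    have lA: "length A = j" using jl A_def by simp
    define \<tau> where "\<tau> = map (\<lambda>x. x - 1) (A @ B)"
    have n0: "0 \<notin> set (A @ B)" 
    proof -
      have "set (A @ B) \<subseteq> set s" using sAB by auto
      then show ?thesis using ss by auto
    qed
    have t: "A @ B = map Suc \<tau>" unfolding \<tau>_def using map_Suc_pred[OF n0] by simp
    have "\<tau> \<in> Sprec m 1 1 \<and> pos \<tau> m < length A \<and> length A \<le> m"
      using core[OF m t] sS sAB by simp
    moreover have "x = (\<tau>, j)" unfolding x phi_def j_def[symmetric] \<tau>_def A_def B_def by simp
    ultimately show "x \<in> Sig" unfolding Sig_def using lA by auto
  qed
  have left: "\<forall>x\<in>Sig. phi (psi x) = x"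
  proof
    fix x assume "x \<in> Sig"
    then obtain \<tau> j where tj: "\<tau> \<in> Sprec m 1 1" "pos \<tau> m < j" "j \<le> m" and x: "x = (\<tau>, j)"
      unfolding Sig_def by auto
    have lt: "length \<tau> = m" using Sprec_len[OF tj(1)] .
    have "psi x \<in> Sprec (Suc m) 1 2" using sub1 \<open>x \<in> Sig\<close> by auto
    then have ds: "distinct (psi x)" unfolding Sprec_def Av1324_def by auto
    have p1: "pos (psi x) 1 = j" by (rule pos_eq[OF ds]) (use tj lt in \<open>auto simp: psi_def x nth_append\<close>)
    have "take j (psi x) @ drop (Suc j) (psi x) = map Suc \<tau>"
      using tj lt by (simp add: psi_def x)
    then show "phi (psi x) = x" unfolding phi_def p1 by (simp add: x comp_def)
  qed
  have right: "\<forall>s\<in>Sprec (Suc m) 1 2. psi (phi s) = s"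
  proof
    fix s assume sS: "s \<in> Sprec (Suc m) 1 2"
    have ds: "distinct s" and ss: "set s = {1..Suc m}" using sS unfolding Sprec_def Av1324_def by auto
    define j where "j = pos s 1"
    have jl: "j < length s" "s ! j = 1" using pos_nth[OF ds, of 1] ss j_def by auto
    define A where "A = take j s"
    define B where "B = drop (Suc j) s"
    have sAB: "s = A @ 1 # B" using jl id_take_nth_drop[OF jl(1)] unfolding A_def B_def by metis
    have lA: "length A = j" using jl A_def by simp
    have n0: "0 \<notin> set (A @ B)" 
    proof -
      have "set (A @ B) \<subseteq> set s" using sAB by auto
      then show ?thesis using ss by auto
    qed
    have t: "map Suc (map (\<lambda>x. x - 1) (A @ B)) = A @ B" using map_Suc_pred[OF n0] by simp
    have "phi s = (map (\<lambda>x. x - 1) (A @ B), j)" unfolding phi_def j_def[symmetric] A_def B_def by simp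
    then have "psi (phi s) = take j (A @ B) @ 1 # drop j (A @ B)" using t by (simp add: psi_def)
    also have "\<dots> = A @ 1 # B" using lA by simp
    finally show "psi (phi s) = s" using sAB by simp
  qed
  have "bij_betw psi Sig (Sprec (Suc m) 1 2)"
    by (rule bij_betw_byWitness[OF left right sub1 sub2])
  then have "card Sig = card (Sprec (Suc m) 1 2)" by (rule bij_betw_same_card)
  then show ?thesis using cS by simp
qed



unbundle fps_syntax

definition rc :: "nat \<Rightarrow> nat list \<Rightarrow> nat list" where
  "rc m s = rev (map (\<lambda>x. Suc m - x) s)"

lemma rc_in:
  assumes m: "m \<ge> 2" and tS: "\<tau> \<in> Sprec m 1 1"
  shows "rc m \<tau> \<in> Sprec m 1 1" "pos (rc m \<tau>) m = m - pos \<tau> m"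
proof -
  have dt: "distinct \<tau>" and st: "set \<tau> = {1..m}" and at: "avoids1324 \<tau>"
    and p1: "int (pos \<tau> m) - int (pos \<tau> 1) = 1"
    using tS unfolding Sprec_def Av1324_def by auto
  have lt: "length \<tau> = m" using len_perm[OF dt st] .
  let ?f = "\<lambda>x. Suc m - x"
  have inj: "inj_on ?f (set \<tau>)" using st by (auto simp: inj_on_def)
  have dr: "distinct (rc m \<tau>)" unfolding rc_def using dt inj by (simp add: distinct_map)
  have img: "?f ` {1..m} = {1..m}"
  proof
    show "?f ` {1..m} \<subseteq> {1..m}" by auto
    show "{1..m} \<subseteq> ?f ` {1..m}"
    proof
      fix x assume x: "x \<in> {1..m}"
      then have "x = ?f (?f x)" "?f x \<in> {1..m}" by auto
      then show "x \<in> ?f ` {1..m}" by (metis imageI)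
    qed
  qed
  have sr: "set (rc m \<tau>) = {1..m}" unfolding rc_def using st img by simp
  have ar: "avoids1324 (rc m \<tau>)" unfolding rc_def by (rule avoids_rc[OF at]) (use st in auto)
  have lr: "length (rc m \<tau>) = m" unfolding rc_def using lt by simp
  have rn: "rc m \<tau> ! p = Suc m - \<tau> ! (m - Suc p)" if "p < m" for p
    unfolding rc_def using that lt by (simp add: rev_nth)
  have pm: "pos \<tau> m < m" "\<tau> ! pos \<tau> m = m" using pos_nth[OF dt, of m] st lt m by auto
  have pone: "pos \<tau> 1 < m" "\<tau> ! pos \<tau> 1 = 1" using pos_nth[OF dt, of 1] st lt m by auto
  have q: "pos \<tau> 1 = pos \<tau> m - 1" "pos \<tau> m \<ge> 1" using p1 by auto
  have e1: "rc m \<tau> ! (m - pos \<tau> m) = m"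
  proof -
    have "m - Suc (m - pos \<tau> m) = pos \<tau> 1" using q pm by auto
    then show ?thesis using rn[of "m - pos \<tau> m"] q pm pone by simp
  qed
  have e2: "rc m \<tau> ! (m - Suc (pos \<tau> m)) = 1"
  proof -
    have "m - Suc (m - Suc (pos \<tau> m)) = pos \<tau> m" using pm by auto
    then show ?thesis using rn[of "m - Suc (pos \<tau> m)"] pm by simp
  qed
  have pr1: "pos (rc m \<tau>) m = m - pos \<tau> m" by (rule pos_eq[OF dr]) (use lr q e1 m in auto)
  have pr2: "pos (rc m \<tau>) 1 = m - Suc (pos \<tau> m)" by (rule pos_eq[OF dr]) (use lr pm e2 in auto)
  have "int (pos (rc m \<tau>) m) - int (pos (rc m \<tau>) 1) = 1" using pr1 pr2 pm q by auto
  then show "rc m \<tau> \<in> Sprec m 1 1" unfolding Sprec_def Av1324_def using dr sr ar by auto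
  show "pos (rc m \<tau>) m = m - pos \<tau> m" by (rule pr1)
qed

lemma rc_rc: assumes "\<forall>x\<in>set s. x \<le> Suc m" shows "rc m (rc m s) = s"
proof -
  have "rc m (rc m s) = map (\<lambda>x. Suc m - (Suc m - x)) s" unfolding rc_def by (simp add: rev_map comp_def)
  also have "\<dots> = s" using assms by (intro map_idI) auto
  finally show ?thesis .
qed

lemma stepB:
  assumes m: "m \<ge> 2"
  shows "(\<Sum>\<tau>\<in>Sprec m 1 1. m - pos \<tau> m) = (\<Sum>\<tau>\<in>Sprec m 1 1. pos \<tau> m)"
proof -
  have inv: "\<forall>\<tau>\<in>Sprec m 1 1. rc m (rc m \<tau>) = \<tau>"
  proof
    fix \<tau> assume "\<tau> \<in> Sprec m 1 1"
    then have "set \<tau> = {1..m}" unfolding Sprec_def Av1324_def by auto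
    then show "rc m (rc m \<tau>) = \<tau>" by (intro rc_rc) auto
  qed
  have sub: "rc m ` Sprec m 1 1 \<subseteq> Sprec m 1 1" using rc_in(1)[OF m] by auto
  have bij: "bij_betw (rc m) (Sprec m 1 1) (Sprec m 1 1)"
    by (rule bij_betw_byWitness[OF inv inv sub sub])
  have "(\<Sum>\<tau>\<in>Sprec m 1 1. m - pos \<tau> m) = (\<Sum>\<tau>\<in>Sprec m 1 1. pos (rc m \<tau>) m)"
    using rc_in(2)[OF m] by (intro sum.cong) auto
  also have "\<dots> = (\<Sum>\<tau>\<in>Sprec m 1 1. pos \<tau> m)"
    by (rule sum.reindex_bij_betw[OF bij])
  finally show ?thesis .
qed

lemma stepC:
  assumes m: "m \<ge> 2"
  shows "2 * card (Sprec (Suc m) 1 2) = m * card (Sprec m 1 1)"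
proof -
  have le: "pos \<tau> m \<le> m" if "\<tau> \<in> Sprec m 1 1" for \<tau>
  proof -
    have "distinct \<tau>" "set \<tau> = {1..m}" using that unfolding Sprec_def Av1324_def by auto
    then show ?thesis using pos_nth(1)[of \<tau> m] len_perm m by fastforce
  qed
  have "2 * card (Sprec (Suc m) 1 2) = (\<Sum>\<tau>\<in>Sprec m 1 1. m - pos \<tau> m) + (\<Sum>\<tau>\<in>Sprec m 1 1. pos \<tau> m)"
    using stepA[OF m] stepB[OF m] by simp
  also have "\<dots> = (\<Sum>\<tau>\<in>Sprec m 1 1. m)"
    by (subst sum.distrib[symmetric]) (intro sum.cong refl, simp add: le)
  also have "\<dots> = m * card (Sprec m 1 1)" by simp
  finally show ?thesis .
qed

lemma Sprec_22: "Sprec 2 1 2 = {}"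
  unfolding Sprec_def by auto

theorem mainTheorem7:
  shows "T21_fps = fps_const (1/2) * fps_X ^ 2 * fps_deriv (fps_X * f_fps)"
proof (rule fps_ext)
  fix n
  have r0: "(fps_const (1/2) * fps_X ^ 2 * fps_deriv (fps_X * f_fps)) $ n =
      1/2 * (if n < 2 then 0 else fps_deriv (fps_X * f_fps) $ (n - 2))"
    by (simp only: mult.assoc fps_mult_left_const_nth fps_X_power_mult_nth)
  have r1: "fps_deriv (fps_X * f_fps) $ (n - 2) = of_nat (n - 1) * f_fps $ (n - 2)" if "n \<ge> 2"
  proof -
    have "fps_deriv (fps_X * f_fps) $ (n - 2) = of_nat (n - 2 + 1) * (fps_X * f_fps) $ (n - 2 + 1)"
      by (rule fps_deriv_nth)
    also have "\<dots> = of_nat (n - 1) * f_fps $ (n - 2)" using that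
      by (simp only: fps_X_mult_nth) (simp add: Suc_diff_Suc numeral_2_eq_2)
    finally show ?thesis .
  qed
  have r: "(fps_const (1/2) * fps_X ^ 2 * fps_deriv (fps_X * f_fps)) $ n =
      (if n < 2 then 0 else 1/2 * (of_nat (n - 1) * f_fps $ (n - 2)))"
  proof (cases "n < 2")
    case True
    then show ?thesis unfolding r0 by simp
  next
    case False
    then have n2: "n \<ge> 2" by simp
    show ?thesis unfolding r0 if_not_P[OF False] r1[OF n2] by (rule refl)
  qed
  show "T21_fps $ n = (fps_const (1/2) * fps_X ^ 2 * fps_deriv (fps_X * f_fps)) $ n"
  proof (cases "n \<ge> 3")
    case True
    then obtain m where nm: "n = Suc m" and m: "m \<ge> 2" by (cases n) auto
    have "of_nat (2 * card (Sprec (Suc m) 1 2)) = (of_nat (m * card (Sprec m 1 1)) :: rat)"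
      using stepC[OF m] by simp
    then have "(of_nat (card (Sprec (Suc m) 1 2)) :: rat) = 1/2 * (of_nat m * of_nat (a_n1 m))"
      unfolding a_n1_def by simp
    moreover have "f_fps $ (n - 2) = of_nat (a_n1 m)" using nm m unfolding f_fps_def by auto
    ultimately show ?thesis unfolding r T21_fps_def using nm m by simp
  next
    case False
    then have "n = 0 \<or> n = 1 \<or> n = 2" by auto
    moreover have "f_fps $ 0 = 0" unfolding f_fps_def by simp
    ultimately show ?thesis unfolding r T21_fps_def using Sprec_22 by auto
  qed
qed


end
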